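(* Let $(P_t)_{t\in\mathbb{R}_+}$ be a stochastically monotone Feller semigroup on $\mathbb{R}$. For $x\in\mathbb{R}$, $t\ge0$, $u\in[0,1]$ let $F^{[-1]}_{x,t}(u)=\inf\{y\in\mathbb{R}:P_t(x,(-\infty,y])\ge u\}\in\overline{\mathbb{R}}$, and let $F^{[-1]}_{-\infty,t}\equiv-\infty$, $F^{[-1]}_{+\infty,t}\equiv+\infty$. Then: (a) for all $x\in\overline{\mathbb{R}}$ and $t\ge0$, $u\mapsto F^{[-1]}_{x,t}(u)$ is non-decreasing; (b) for all $x\in\mathbb{R}$, $t\ge0$, $u\in(0,1)$, $F^{[-1]}_{x,t}(u)\in\mathbb{R}$; (c) for all $t\ge0$ and $u\in(0,1)$, $x\mapsto F^{[-1]}_{x,t}(u)$ is non-decreasing on $\overline{\mathbb{R}}$; (d) if $U$ is uniform on $[0,1]$, then for all $x\in\overline{\mathbb{R}}$, $t\ge0$, the law of $F^{[-1]}_{x,t}(U)$ is $\tilde{P}_t(x,\cdot)$; (e) for all $t\ge0$ and $x\in\overline{\mathbb{R}}$, for all $u\in[0,1]$ outside an at most countable set, the map $y\mapsto F^{[-1]}_{y,t}(u)$ from $\overline{\mathbb{R}}$ to $\overline{\mathbb{R}}$ is continuous at $x$.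
   Context: $\overline{\mathbb{R}}=[-\infty,+\infty]$ with the topology given by the metric $|\tanh y-\tanh x|$. $\tilde{P}_t$ is the kernel on $\overline{\mathbb{R}}$ with $\tilde{P}_t(x,B)=P_t(x,B\cap\mathbb{R})$ for $x\in\mathbb{R}$ and $\tilde{P}_t(\pm\infty,\cdot)=\delta_{\pm\infty}$. Feller semigroup on $\mathbb{R}$: Markov semigroup with $P_tf\in\mathcal{C}_0(\mathbb{R})$ for $f\in\mathcal{C}_0(\mathbb{R})$ and $\sup_x|P_tf-f|\to0$ as $t\to0^+$; stochastically monotone: $P_tf$ non-decreasing for bounded non-decreasing Borel $f$. *)

theory Defs
  imports "HOL-Probability.Probability"
begin

text \<open>A transition semigroup on the reals is modelled as P :: real => real => real measure,
  P t x being the measure P_t(x, .). Only t >= 0 is relevant.\<close>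

definition Pf :: "(real \<Rightarrow> real \<Rightarrow> real measure) \<Rightarrow> real \<Rightarrow> (real \<Rightarrow> real) \<Rightarrow> real \<Rightarrow> real" where
  "Pf P t f x = (\<integral>y. f y \<partial>(P t x))"

definition markov_semigroup :: "(real \<Rightarrow> real \<Rightarrow> real measure) \<Rightarrow> bool" where
  "markov_semigroup P \<longleftrightarrow>
     (\<forall>t\<ge>0. \<forall>x. prob_space (P t x) \<and> sets (P t x) = sets borel) \<and>
     (\<forall>t\<ge>0. \<forall>B\<in>sets borel. (\<lambda>x. measure (P t x) B) \<in> borel_measurable borel) \<and>
     (\<forall>x. P 0 x = return borel x) \<and>
     (\<forall>s\<ge>0. \<forall>t\<ge>0. \<forall>x. \<forall>B\<in>sets borel.
        emeasure (P (s + t) x) B = (\<integral>\<^sup>+ y. emeasure (P t y) B \<partial>(P s x)))"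

definition C0 :: "(real \<Rightarrow> real) \<Rightarrow> bool" where
  "C0 f \<longleftrightarrow> continuous_on UNIV f \<and> (f \<longlongrightarrow> 0) at_infinity"

definition feller_semigroup :: "(real \<Rightarrow> real \<Rightarrow> real measure) \<Rightarrow> bool" where
  "feller_semigroup P \<longleftrightarrow> markov_semigroup P \<and>
     (\<forall>f. C0 f \<longrightarrow>
        (\<forall>t\<ge>0. C0 (Pf P t f)) \<and>
        (\<forall>e>0. \<exists>d>0. \<forall>t. 0 < t \<and> t < d \<longrightarrow> (\<forall>x. \<bar>Pf P t f x - f x\<bar> \<le> e)))"

definition stoch_monotone :: "(real \<Rightarrow> real \<Rightarrow> real measure) \<Rightarrow> bool" where
  "stoch_monotone P \<longleftrightarrow>
     (\<forall>t\<ge>0. \<forall>f. f \<in> borel_measurable borel \<and> bounded (range f) \<and> mono f \<longrightarrow> mono (Pf P t f))"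

definition Finv :: "(real \<Rightarrow> real \<Rightarrow> real measure) \<Rightarrow> real \<Rightarrow> ereal \<Rightarrow> real \<Rightarrow> ereal" where
  "Finv P t x u = (case x of
      ereal r \<Rightarrow> Inf (ereal ` {y. measure (P t r) {..y} \<ge> u})
    | PInfty \<Rightarrow> \<infinity>
    | MInfty \<Rightarrow> -\<infinity>)"

definition Ptilde :: "(real \<Rightarrow> real \<Rightarrow> real measure) \<Rightarrow> real \<Rightarrow> ereal \<Rightarrow> ereal measure" where
  "Ptilde P t x = (case x of
      ereal r \<Rightarrow> distr (P t r) borel ereal
    | PInfty \<Rightarrow> return borel \<infinity>
    | MInfty \<Rightarrow> return borel (-\<infinity>))"

end

theory Submission
  imports Defs
begin


definition tr :: "real \<Rightarrow> real \<Rightarrow> real \<Rightarrow> real \<Rightarrow> real \<Rightarrow> real" where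
  "tr a b c d x = max 0 (min 1 (min ((x-a)/(b-a)) ((d-x)/(d-c))))"

lemma tr_ge0: "0 \<le> tr a b c d x" by (simp add: tr_def)
lemma tr_le1: "tr a b c d x \<le> 1" by (simp add: tr_def)

lemma tr_zero1: assumes "a < b" "x \<le> a" shows "tr a b c d x = 0"
proof -
  have "(x-a)/(b-a) \<le> 0" using assms by (simp add: divide_nonpos_pos)
  then show ?thesis by (simp add: tr_def)
qed

lemma tr_zero2: assumes "c < d" "d \<le> x" shows "tr a b c d x = 0"
proof -
  have "(d-x)/(d-c) \<le> 0" using assms by (simp add: divide_nonpos_pos)
  then show ?thesis by (simp add: tr_def)
qed

lemma tr_one: assumes "a < b" "c < d" "b \<le> x" "x \<le> c" shows "tr a b c d x = 1"
proof -
  have "1 \<le> (x-a)/(b-a)" using assms by (simp add: divide_simps)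
  moreover have "1 \<le> (d-x)/(d-c)" using assms by (simp add: divide_simps)
  ultimately show ?thesis by (simp add: tr_def)
qed

lemma tr_cont: assumes "a < b" "c < d" shows "continuous_on UNIV (tr a b c d)"
  unfolding tr_def using assms by (intro continuous_intros) auto

lemma tr_C0: assumes "a < b" "c < d" shows "C0 (tr a b c d)"
  unfolding C0_def
proof (intro conjI tr_cont assms)
  show "(tr a b c d \<longlongrightarrow> 0) at_infinity"
  proof (rule tendsto_eventually)
    show "\<forall>\<^sub>F x in at_infinity. tr a b c d x = 0"
      unfolding eventually_at_infinity
    proof (intro exI[of _ "\<bar>a\<bar> + \<bar>d\<bar> + 1"] allI impI)
      fix x :: real assume "\<bar>a\<bar> + \<bar>d\<bar> + 1 \<le> norm x"
      then have "x \<le> a \<or> d \<le> x" by auto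
      then show "tr a b c d x = 0" using tr_zero1 tr_zero2 assms by blast
    qed
  qed
qed

lemma tr_meas: assumes "a < b" "c < d" shows "tr a b c d \<in> borel_measurable borel"
  using borel_measurable_continuous_onI[OF tr_cont[OF assms]] .

lemma mono_ereal_meas:
  fixes f :: "real \<Rightarrow> ereal" assumes "mono f" shows "f \<in> borel_measurable borel"
proof (rule borel_measurableI_less)
  fix y
  have "is_interval {x. f x < y}"
    unfolding is_interval_1 using assms by (auto dest: monoD intro: le_less_trans)
  then show "{x \<in> space borel. f x < y} \<in> sets borel" using real_interval_borel_measurable by simp
qed

context real_distribution begin

lemma int_tr: assumes "a < b" "c < d" shows "integrable M (tr a b c d)"
proof (rule integrable_const_bound[where B=1])
  show "AE x in M. norm (tr a b c d x) \<le> 1" using tr_ge0 tr_le1 by simp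
  show "tr a b c d \<in> borel_measurable M"
    using tr_meas[OF assms] measurable_cong_sets[OF events_eq_borel refl] by simp
qed

lemma int_ind: "(\<integral>x. indicator {..z} x \<partial>M) = cdf M z"
  by (simp add: cdf_def)

lemma int_indI[simp]: "integrable M (indicator {..z} :: real \<Rightarrow> real)"
  by (intro integrable_real_indicator) (simp_all add: less_top[symmetric])

lemma L1: assumes "a < b" "c < d" "b \<le> c"
  shows "cdf M c - cdf M b \<le> (\<integral>x. tr a b c d x \<partial>M)"
proof -
  have "cdf M c - cdf M b = (\<integral>x. indicator {..c} x - indicator {..b} x \<partial>M)"
    by (simp add: integral_diff cdf_def del: indicator_simps)
  also have "\<dots> \<le> (\<integral>x. tr a b c d x \<partial>M)"
  proof (rule integral_mono)
    show "integrable M (\<lambda>x. indicator {..c} x - indicator {..b} x :: real)" by simp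
    show "integrable M (tr a b c d)" by (rule int_tr[OF assms(1,2)])
    fix x
    show "indicator {..c} x - indicator {..b} x \<le> tr a b c d x"
      using tr_one[OF assms(1,2), of x] tr_ge0[of a b c d x]
      by (cases "x \<le> b"; cases "x \<le> c") (auto simp: indicator_def)
  qed
  finally show ?thesis .
qed

lemma L2: assumes "a < b" "c < d"
  shows "(\<integral>x. tr a b c d x \<partial>M) \<le> cdf M d"
proof -
  have "(\<integral>x. tr a b c d x \<partial>M) \<le> (\<integral>x. indicator {..d} x \<partial>M)"
  proof (rule integral_mono)
    show "integrable M (tr a b c d)" by (rule int_tr[OF assms(1,2)])
    fix x
    show "tr a b c d x \<le> indicator {..d} x"
      using tr_zero2[OF assms(2), of x] tr_le1[of a b c d x]
      by (cases "x \<le> d") (auto simp: indicator_def)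
  qed simp
  then show ?thesis by (simp add: cdf_def)
qed

lemma L3: assumes "a < b" "c < d"
  shows "(\<integral>x. tr a b c d x \<partial>M) \<le> 1 - cdf M a"
proof -
  have "(\<integral>x. tr a b c d x \<partial>M) \<le> (\<integral>x. 1 - indicator {..a} x \<partial>M)"
  proof (rule integral_mono)
    show "integrable M (tr a b c d)" by (rule int_tr[OF assms(1,2)])
    fix x
    show "tr a b c d x \<le> 1 - indicator {..a} x"
      using tr_zero1[OF assms(1), of x] tr_le1[of a b c d x]
      by (cases "x \<le> a") (auto simp: indicator_def)
  qed simp
  also have "\<dots> = 1 - cdf M a"
    using prob_space by (simp add: integral_diff cdf_def del: indicator_simps)
  finally show ?thesis .
qed

end

context cdf_distribution begin

lemma cdf_set_ne: "u < 1 \<Longrightarrow> {y. u \<le> cdf M y} \<noteq> {}"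
  using order_tendstoD(1)[OF cdf_lim_at_top_prob, of u]
  by (auto dest!: eventually_happens'[OF trivial_limit_at_top_linorder] intro: less_imp_le)

lemma cdf_set_bdd: assumes "0 < u" shows "bdd_below {y. u \<le> cdf M y}"
proof -
  obtain y where y: "cdf M y < u"
    by (metis eventually_happens' trivial_limit_at_bot_linorder order_tendstoD(2) cdf_lim_at_bot assms)
  show ?thesis
  proof (rule bdd_belowI[of _ y])
    fix x assume "x \<in> {y. u \<le> cdf M y}"
    then have "u \<le> cdf M x" by simp
    show "y \<le> x"
    proof (rule ccontr)
      assume "\<not> y \<le> x"
      then have "cdf M x \<le> cdf M y" by (intro cdf_nondecreasing) auto
      with y \<open>u \<le> cdf M x\<close> show False by auto
    qed
  qed
qed

lemma Qeq: assumes "0 < u" "u < 1"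
  shows "Inf (ereal ` {y. u \<le> measure M {..y}}) = ereal (I u)"
  using ereal_Inf'[OF cdf_set_bdd[OF assms(1)] cdf_set_ne[OF assms(2)]] by (simp add: cdf_def)

end



lemma ev_ereal_at: assumes "\<delta> > 0" "\<And>y. \<bar>y - x\<bar> < \<delta> \<Longrightarrow> P (ereal y)"
  shows "eventually P (at (ereal x))"
  unfolding eventually_at_topological
proof (intro exI[of _ "{ereal (x-\<delta>)<..<ereal (x+\<delta>)}"] conjI ballI impI)
  show "open {ereal (x-\<delta>)<..<ereal (x+\<delta>)}" by simp
  show "ereal x \<in> {ereal (x-\<delta>)<..<ereal (x+\<delta>)}" using assms(1) by simp
  fix w assume "w \<in> {ereal (x-\<delta>)<..<ereal (x+\<delta>)}"
  then show "P w" using assms(2) by (cases w) auto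
qed

lemma ev_ereal_top: assumes "\<And>y. Y \<le> y \<Longrightarrow> P (ereal y)"
  shows "eventually P (at \<infinity>)"
  unfolding eventually_at_topological
proof (intro exI[of _ "{ereal Y<..}"] conjI ballI impI)
  show "open {ereal Y<..}" by simp
  show "\<infinity> \<in> {ereal Y<..}" by simp
  fix w assume "w \<in> {ereal Y<..}" "w \<noteq> \<infinity>"
  then show "P w" using assms by (cases w) auto
qed

lemma ev_ereal_bot: assumes "\<And>y. y \<le> Y \<Longrightarrow> P (ereal y)"
  shows "eventually P (at (-\<infinity>))"
  unfolding eventually_at_topological
proof (intro exI[of _ "{..<ereal Y}"] conjI ballI impI)
  show "open {..<ereal Y}" by simp
  show "-\<infinity> \<in> {..<ereal Y}" by simp
  fix w assume "w \<in> {..<ereal Y}" "w \<noteq> -\<infinity>"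
  then show "P w" using assms by (cases w) auto
qed

context cdf_distribution begin
lemma pinv: assumes "0 < u" "u < 1" shows "u \<le> cdf M x \<longleftrightarrow> I u \<le> x"
  by (rule pseudoinverse[OF assms])
lemma monoI': "mono_on {0<..<1} I"
  by (rule mono_I)
end

locale FS =
  fixes K :: "real \<Rightarrow> real measure"
  assumes rd: "\<And>r. cdf_distribution (K r)"
  and ct: "\<And>h x. C0 h \<Longrightarrow> isCont (\<lambda>r. \<integral>y. h y \<partial>K r) x"
  and lim: "\<And>h. C0 h \<Longrightarrow> ((\<lambda>r. \<integral>y. h y \<partial>K r) \<longlongrightarrow> 0) at_infinity"
  and mn: "\<And>r r' z. r \<le> r' \<Longrightarrow> cdf (K r') z \<le> cdf (K r) z"
begin

definition G where "G y u = (case y of ereal r \<Rightarrow> Inf (ereal ` {z. u \<le> measure (K r) {..z}})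
   | PInfty \<Rightarrow> \<infinity> | MInfty \<Rightarrow> -\<infinity>)"

abbreviation Iq where "Iq r v \<equiv> Inf {y. v \<le> cdf (K r) y}"

lemma rdist: "real_distribution (K r)" using rd[of r] by (simp add: cdf_distribution_def)

lemma Geq: assumes "0 < u" "u < 1" shows "G (ereal r) u = ereal (Iq r u)"
proof -
  have "G (ereal r) u = Inf (ereal ` {z. u \<le> measure (K r) {..z}})" by (simp add: G_def)
  also have "\<dots> = ereal (Iq r u)" by (rule cdf_distribution.Qeq[OF rd assms])
  finally show ?thesis .
qed

lemma pinv: "0 < u \<Longrightarrow> u < 1 \<Longrightarrow> u \<le> cdf (K r) z \<longleftrightarrow> Iq r u \<le> z"
  by (rule cdf_distribution.pinv[OF rd])

lemma cdf_bot: "(cdf (K r) \<longlongrightarrow> 0) at_bot"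
proof -
  interpret real_distribution "K r" by (rule rdist)
  show ?thesis by (rule cdf_lim_at_bot)
qed

lemma cdf_top: "(cdf (K r) \<longlongrightarrow> 1) at_top"
proof -
  interpret real_distribution "K r" by (rule rdist)
  show ?thesis by (rule cdf_lim_at_top_prob)
qed

lemma near: assumes "C0 h" "c < (\<integral>w. h w \<partial>K x)"
  obtains \<delta> where "\<delta> > 0" "\<And>y. \<bar>y - x\<bar> < \<delta> \<Longrightarrow> c < (\<integral>w. h w \<partial>K y)"
proof -
  let ?f = "\<lambda>r. \<integral>w. h w \<partial>K r"
  have "\<forall>e>0. \<exists>d>0. \<forall>y. dist y x < d \<longrightarrow> dist (?f y) (?f x) < e"
    using ct[OF assms(1), of x] unfolding continuous_at_eps_delta by blast
  moreover have "?f x - c > 0" using assms(2) by simp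
  ultimately obtain \<delta> where d: "\<delta> > 0" "\<And>y. dist y x < \<delta> \<Longrightarrow> dist (?f y) (?f x) < ?f x - c"
    by blast
  show ?thesis
  proof (rule that[OF d(1)])
    fix y assume "\<bar>y - x\<bar> < \<delta>"
    then have "dist (?f y) (?f x) < ?f x - c" using d(2) by (simp add: dist_real_def)
    then show "c < ?f y" unfolding dist_real_def by linarith
  qed
qed

lemma cont_real:
  assumes u: "0 < u" "u < 1" and ic: "isCont (Iq x) u"
  shows "isCont (\<lambda>y. G y u) (ereal x)"
proof -
  define q where "q = Iq x u"
  have Gx: "G (ereal x) u = ereal q" using Geq u q_def by simp
  have ic0: "\<forall>e>0. \<exists>d>0. \<forall>v. dist v u < d \<longrightarrow> dist (Iq x v) (Iq x u) < e"
    using ic unfolding continuous_at_eps_delta .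
  have ic': "\<And>e. e > 0 \<Longrightarrow> \<exists>d>0. \<forall>v. \<bar>v - u\<bar> < d \<longrightarrow> \<bar>Iq x v - q\<bar> < e"
    using ic0 by (simp add: dist_real_def q_def)
  show ?thesis
    unfolding continuous_at Gx
  proof (rule order_tendstoI)
    fix a assume "ereal q < a"
    then obtain z where z: "ereal q < ereal z" "ereal z < a" using ereal_dense2 by blast
    then have qz: "q < z" by simp
    define z' where "z' = (q + z)/2"
    have zz: "z' - q > 0" "q < z'" "z' < z" using qz by (auto simp: z'_def)
    obtain d where d: "d > 0" "\<And>v. \<bar>v - u\<bar> < d \<Longrightarrow> \<bar>Iq x v - q\<bar> < z' - q" using ic'[OF zz(1)] by blast
    define e where "e = min d (1-u)"
    have e: "e > 0" "e \<le> d" "e \<le> 1-u" using d u by (auto simp: e_def)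
    define v where "v = u + e / 2"
    have v: "u < v" "v < 1" "\<bar>v - u\<bar> < d" using e unfolding v_def by auto
    have "Iq x v < z'" using d(2)[OF v(3)] by auto
    then have vF: "v \<le> cdf (K x) z'" using pinv[of v x z'] v u by auto
    have "eventually (\<lambda>n. cdf (K x) n < v - u) at_bot"
      using order_tendstoD(2)[OF cdf_bot[of x], of "v-u"] v by simp
    then obtain N0 where N0: "\<And>n. n \<le> N0 \<Longrightarrow> cdf (K x) n < v - u"
      unfolding eventually_at_bot_linorder by blast
    define m where "m = min N0 (z' - 1)"
    have m: "m < z'" "cdf (K x) m < v - u" using N0 by (auto simp: m_def)
    have C: "C0 (tr (m-1) m z' z)" by (rule tr_C0) (use zz in auto)
    have "cdf (K x) z' - cdf (K x) m \<le> (\<integral>y. tr (m-1) m z' z y \<partial>K x)"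
      by (rule real_distribution.L1[OF rdist]) (use m zz in auto)
    then have hx: "u < (\<integral>y. tr (m-1) m z' z y \<partial>K x)" using m vF by linarith
    obtain \<delta> where \<delta>: "\<delta> > 0" "\<And>y. \<bar>y - x\<bar> < \<delta> \<Longrightarrow> u < (\<integral>w. tr (m-1) m z' z w \<partial>K y)"
      using near[OF C hx] by blast
    show "eventually (\<lambda>y. G y u < a) (at (ereal x))"
    proof (rule ev_ereal_at[OF \<delta>(1)])
      fix y assume "\<bar>y - x\<bar> < \<delta>"
      then have "u < (\<integral>w. tr (m-1) m z' z w \<partial>K y)" using \<delta>(2) by blast
      moreover have "(\<integral>w. tr (m-1) m z' z w \<partial>K y) \<le> cdf (K y) z"
        by (rule real_distribution.L2[OF rdist]) (use m zz in auto)
      ultimately have "u \<le> cdf (K y) z" by linarith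
      then have "Iq y u \<le> z" using pinv[OF u] by blast
      then have "G (ereal y) u \<le> ereal z" by (simp add: Geq[OF u])
      then show "G (ereal y) u < a" using z(2) by (rule le_less_trans)
    qed
  next
    fix a assume "a < ereal q"
    then obtain w where w: "a < ereal w" "ereal w < ereal q" using ereal_dense2 by blast
    then have wq: "w < q" by simp
    define w' where "w' = (w + q)/2"
    have ww: "q - w' > 0" "w < w'" "w' < q" using wq by (auto simp: w'_def)
    obtain d where d: "d > 0" "\<And>v. \<bar>v - u\<bar> < d \<Longrightarrow> \<bar>Iq x v - q\<bar> < q - w'" using ic'[OF ww(1)] by blast
    define e where "e = min d u"
    have e: "e > 0" "e \<le> d" "e \<le> u" using d u by (auto simp: e_def)
    define v where "v = u - e / 2"
    have v: "0 < v" "v < u" "\<bar>v - u\<bar> < d" using e unfolding v_def by auto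
    have "w' < Iq x v" using d(2)[OF v(3)] by auto
    then have vF: "cdf (K x) w' < v" using pinv[of v x w'] v u by auto
    have "eventually (\<lambda>n. 1 - u + v < cdf (K x) n) at_top"
      using order_tendstoD(1)[OF cdf_top[of x], of "1 - u + v"] v by simp
    then obtain N0 where N0: "\<And>n. N0 \<le> n \<Longrightarrow> 1 - u + v < cdf (K x) n"
      unfolding eventually_at_top_linorder by blast
    define N where "N = max N0 (w' + 1)"
    have N: "w' < N" "1 - u + v < cdf (K x) N" using N0 by (auto simp: N_def)
    have C: "C0 (tr w w' N (N+1))" by (rule tr_C0) (use ww in auto)
    have "cdf (K x) N - cdf (K x) w' \<le> (\<integral>y. tr w w' N (N+1) y \<partial>K x)"
      by (rule real_distribution.L1[OF rdist]) (use N ww in auto)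
    then have hx: "1 - u < (\<integral>y. tr w w' N (N+1) y \<partial>K x)" using N vF by linarith
    obtain \<delta> where \<delta>: "\<delta> > 0" "\<And>y. \<bar>y - x\<bar> < \<delta> \<Longrightarrow> 1 - u < (\<integral>t. tr w w' N (N+1) t \<partial>K y)"
      using near[OF C hx] by blast
    show "eventually (\<lambda>y. a < G y u) (at (ereal x))"
    proof (rule ev_ereal_at[OF \<delta>(1)])
      fix y assume "\<bar>y - x\<bar> < \<delta>"
      then have "1 - u < (\<integral>t. tr w w' N (N+1) t \<partial>K y)" using \<delta>(2) by blast
      moreover have "(\<integral>t. tr w w' N (N+1) t \<partial>K y) \<le> 1 - cdf (K y) w"
        by (rule real_distribution.L3[OF rdist]) (use N ww in auto)
      ultimately have "\<not> u \<le> cdf (K y) w" by linarith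
      then have "\<not> Iq y u \<le> w" using pinv[OF u] by blast
      then have "ereal w < G (ereal y) u" by (simp add: Geq[OF u])
      with w(1) show "a < G (ereal y) u" by (rule less_trans)
    qed
  qed
qed

end


lemma distr_const_prob: assumes "prob_space M" "c \<in> space N"
  shows "distr M N (\<lambda>_. c) = return N c"
proof (rule measure_eqI)
  show "sets (distr M N (\<lambda>_. c)) = sets (return N c)" by simp
  fix A assume "A \<in> sets (distr M N (\<lambda>_. c))"
  then have A: "A \<in> sets N" by simp
  have "emeasure (distr M N (\<lambda>_. c)) A = emeasure M ((\<lambda>_. c) -` A \<inter> space M)"
    using A assms(2) by (simp add: emeasure_distr)
  also have "\<dots> = indicator A c"
    using prob_space.emeasure_space_1[OF assms(1)] by (cases "c \<in> A") auto
  also have "\<dots> = emeasure (return N c) A" using A by simp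
  finally show "emeasure (distr M N (\<lambda>_. c)) A = emeasure (return N c) A" .
qed

context FS begin

lemma G_mono_u: "u \<le> v \<Longrightarrow> G y u \<le> G y v"
  by (cases y) (auto simp: G_def intro!: Inf_superset_mono image_mono)

lemma G_mono_x: "x \<le> y \<Longrightarrow> G x u \<le> G y u"
proof (cases x; cases y)
  fix r s assume xy: "x \<le> y" "x = ereal r" "y = ereal s"
  then have "r \<le> s" by simp
  then have "\<And>z. measure (K s) {..z} \<le> measure (K r) {..z}"
    using mn[of r s] by (simp add: cdf_def)
  then have "{z. u \<le> measure (K s) {..z}} \<subseteq> {z. u \<le> measure (K r) {..z}}"
    by (auto intro: order_trans)
  then show ?thesis using xy by (auto simp: G_def intro!: Inf_superset_mono image_mono)
qed (auto simp: G_def)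

lemma cont_top: assumes u: "0 < u" "u < 1" shows "isCont (\<lambda>y. G y u) \<infinity>"
proof -
  have Gi: "G \<infinity> u = \<infinity>" by (simp add: G_def)
  show ?thesis unfolding continuous_at Gi
  proof (rule order_tendstoI)
    fix a :: ereal assume "a < \<infinity>"
    then obtain w where w: "a < ereal w" using ereal_dense2 by blast
    have "eventually (\<lambda>n. cdf (K 0) n < u/2) at_bot"
      using order_tendstoD(2)[OF cdf_bot[of 0], of "u/2"] u by simp
    then obtain N0 where N0: "\<And>n. n \<le> N0 \<Longrightarrow> cdf (K 0) n < u/2"
      unfolding eventually_at_bot_linorder by blast
    define m where "m = min N0 (w - 1)"
    have m: "m < w" "cdf (K 0) m < u/2" using N0 by (auto simp: m_def)
    have C: "C0 (tr (m-1) m w (w+1))" by (rule tr_C0) auto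
    have "eventually (\<lambda>r. (\<integral>y. tr (m-1) m w (w+1) y \<partial>K r) < u/2) at_top"
      using order_tendstoD(2)[OF tendsto_mono[OF at_top_le_at_infinity lim[OF C]], of "u/2"] u by simp
    then obtain Y where Y: "\<And>r. Y \<le> r \<Longrightarrow> (\<integral>y. tr (m-1) m w (w+1) y \<partial>K r) < u/2"
      unfolding eventually_at_top_linorder by blast
    show "eventually (\<lambda>y. a < G y u) (at \<infinity>)"
    proof (rule ev_ereal_top[of "max Y 0"])
      fix y assume y: "max Y 0 \<le> y"
      have "cdf (K y) w - cdf (K y) m \<le> (\<integral>t. tr (m-1) m w (w+1) t \<partial>K y)"
        by (rule real_distribution.L1[OF rdist]) (use m in auto)
      moreover have "cdf (K y) m \<le> cdf (K 0) m" using mn y by auto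
      moreover have "(\<integral>t. tr (m-1) m w (w+1) t \<partial>K y) < u/2" using Y y by auto
      ultimately have "\<not> u \<le> cdf (K y) w" using m by linarith
      then have "\<not> Iq y u \<le> w" using pinv[OF u] by blast
      then have "ereal w < G (ereal y) u" by (simp add: Geq[OF u])
      with w show "a < G (ereal y) u" by (rule less_trans)
    qed
  next
    fix a :: ereal assume "\<infinity> < a" then show "eventually (\<lambda>y. G y u < a) (at \<infinity>)" by simp
  qed
qed

lemma cont_bot: assumes u: "0 < u" "u < 1" shows "isCont (\<lambda>y. G y u) (-\<infinity>)"
proof -
  have Gi: "G (-\<infinity>) u = -\<infinity>" by (simp add: G_def)
  show ?thesis unfolding continuous_at Gi
  proof (rule order_tendstoI)
    fix a :: ereal assume "a < -\<infinity>" then show "eventually (\<lambda>y. a < G y u) (at (-\<infinity>))" by simp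
  next
    fix a :: ereal assume "-\<infinity> < a"
    then obtain z where z: "ereal z < a" using ereal_dense2 by blast
    have "eventually (\<lambda>n. (1+u)/2 < cdf (K 0) n) at_top"
      using order_tendstoD(1)[OF cdf_top[of 0], of "(1+u)/2"] u by simp
    then obtain N0 where N0: "\<And>n. N0 \<le> n \<Longrightarrow> (1+u)/2 < cdf (K 0) n"
      unfolding eventually_at_top_linorder by blast
    define N where "N = max N0 (z + 1)"
    have N: "z < N" "(1+u)/2 < cdf (K 0) N" using N0 by (auto simp: N_def)
    have C: "C0 (tr (z-1) z N (N+1))" by (rule tr_C0) auto
    have "eventually (\<lambda>r. (\<integral>y. tr (z-1) z N (N+1) y \<partial>K r) < (1-u)/2) at_bot"
      using order_tendstoD(2)[OF tendsto_mono[OF at_bot_le_at_infinity lim[OF C]], of "(1-u)/2"] u by simp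
    then obtain Y where Y: "\<And>r. r \<le> Y \<Longrightarrow> (\<integral>y. tr (z-1) z N (N+1) y \<partial>K r) < (1-u)/2"
      unfolding eventually_at_bot_linorder by blast
    show "eventually (\<lambda>y. G y u < a) (at (-\<infinity>))"
    proof (rule ev_ereal_bot[of "min Y 0"])
      fix y assume y: "y \<le> min Y 0"
      have "cdf (K y) N - cdf (K y) z \<le> (\<integral>t. tr (z-1) z N (N+1) t \<partial>K y)"
        by (rule real_distribution.L1[OF rdist]) (use N in auto)
      moreover have "cdf (K 0) N \<le> cdf (K y) N" using mn y by auto
      moreover have "(\<integral>t. tr (z-1) z N (N+1) t \<partial>K y) < (1-u)/2" using Y y by auto
      ultimately have "u \<le> cdf (K y) z" using N by argo
      then have "Iq y u \<le> z" using pinv[OF u] by blast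
      then have "G (ereal y) u \<le> ereal z" by (simp add: Geq[OF u])
      then show "G (ereal y) u < a" using z by (rule le_less_trans)
    qed
  qed
qed

lemma exc: assumes "\<And>u. 0 < u \<Longrightarrow> u < 1 \<Longrightarrow> \<not> isCont (\<lambda>y. G y u) x \<Longrightarrow> u \<in> D"
  shows "{u \<in> {0..1::real}. \<not> isCont (\<lambda>y. G y u) x} \<subseteq> {0,1} \<union> D"
proof
  fix u assume "u \<in> {u \<in> {0..1::real}. \<not> isCont (\<lambda>y. G y u) x}"
  then have u: "0 \<le> u" "u \<le> 1" "\<not> isCont (\<lambda>y. G y u) x" by auto
  show "u \<in> {0,1} \<union> D"
  proof (cases "u = 0 \<or> u = 1")
    case True then show ?thesis by auto
  next
    case False then have "0 < u" "u < 1" using u by auto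
    then show ?thesis using assms u(3) by blast
  qed
qed

lemma ctble: "countable {u \<in> {0..1::real}. \<not> isCont (\<lambda>y. G y u) x}"
proof (cases x)
  case (real r)
  have sub: "{u \<in> {0..1::real}. \<not> isCont (\<lambda>y. G y u) x} \<subseteq> {0,1} \<union> {u \<in> {0<..<1}. \<not> isCont (Iq r) u}"
  proof (rule exc)
    fix u :: real assume u: "0 < u" "u < 1" and nc: "\<not> isCont (\<lambda>y. G y u) x"
    have "\<not> isCont (Iq r) u"
    proof
      assume "isCont (Iq r) u"
      then have "isCont (\<lambda>y. G y u) (ereal r)" by (rule cont_real[OF u])
      with nc real show False by simp
    qed
    then show "u \<in> {u \<in> {0<..<1}. \<not> isCont (Iq r) u}" using u by simp
  qed
  have "countable {u \<in> {0<..<1}. \<not> isCont (Iq r) u}"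
    by (rule mono_on_ctble_discont_open[OF open_greaterThanLessThan cdf_distribution.monoI'[OF rd]])
  then have "countable ({0::real,1} \<union> {u \<in> {0<..<1}. \<not> isCont (Iq r) u})"
    by (intro countable_Un) (simp_all add: countable_finite)
  then show ?thesis using sub by (rule countable_subset[rotated])
next
  case PInf
  have sub: "{u \<in> {0..1::real}. \<not> isCont (\<lambda>y. G y u) x} \<subseteq> {0,1} \<union> {}"
  proof (rule exc)
    fix u :: real assume u: "0 < u" "u < 1" and nc: "\<not> isCont (\<lambda>y. G y u) x"
    have "isCont (\<lambda>y. G y u) \<infinity>" by (rule cont_top[OF u])
    with nc PInf show "u \<in> {}" by simp
  qed
  have "countable ({0::real,1} \<union> {})" by (intro countable_finite) simp
  then show ?thesis using sub by (rule countable_subset[rotated])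
next
  case MInf
  have sub: "{u \<in> {0..1::real}. \<not> isCont (\<lambda>y. G y u) x} \<subseteq> {0,1} \<union> {}"
  proof (rule exc)
    fix u :: real assume u: "0 < u" "u < 1" and nc: "\<not> isCont (\<lambda>y. G y u) x"
    have "isCont (\<lambda>y. G y u) (-\<infinity>)" by (rule cont_bot[OF u])
    with nc MInf show "u \<in> {}" by simp
  qed
  have "countable ({0::real,1} \<union> {})" by (intro countable_finite) simp
  then show ?thesis using sub by (rule countable_subset[rotated])
qed

lemma distr_real: "distr (uniform_measure lborel {0..1::real}) borel (G (ereal r)) = distr (K r) borel ereal"
proof -
  interpret cdf_distribution "K r" by (rule rd)
  let ?U = "uniform_measure lborel {0..1::real}"
  let ?Q = "G (ereal r)"
  let ?O = "restrict_space lborel {0<..<1::real}"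
  have mQ: "?Q \<in> borel_measurable borel" by (rule mono_ereal_meas) (auto intro: monoI G_mono_u)
  have "measurable ?U (borel :: ereal measure) = measurable borel borel"
    by (intro measurable_cong_sets) simp_all
  then have mQU: "?Q \<in> borel_measurable ?U" using mQ by simp
  have "measurable ?O (borel :: real measure) = measurable (restrict_space borel {0<..<1}) borel"
    by (intro measurable_cong_sets) (simp_all add: sets_restrict_space)
  then have mI: "I \<in> borel_measurable ?O" using measurable_CI by simp
  have me: "(ereal :: real \<Rightarrow> ereal) \<in> borel_measurable (K r)" by measurable
  have meb: "(ereal :: real \<Rightarrow> ereal) \<in> borel_measurable borel" by measurable
  show ?thesis
  proof (rule measure_eqI)
    show "sets (distr ?U borel ?Q) = sets (distr (K r) borel ereal)" by simp
    fix A assume "A \<in> sets (distr ?U borel ?Q)"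
    then have A: "A \<in> sets borel" by simp
    have QA: "?Q -` A \<in> sets borel" using measurable_sets[OF mQ A] by simp
    have "emeasure (distr ?U borel ?Q) A = emeasure ?U (?Q -` A)"
      by (subst emeasure_distr[OF mQU A]) simp
    also have "\<dots> = emeasure lborel ({0..1} \<inter> ?Q -` A)"
      using QA by (simp add: emeasure_uniform_measure divide_ennreal_def)
    also have "\<dots> = emeasure lborel ({0<..<1} \<inter> ?Q -` A)"
    proof (rule emeasure_eq_AE)
      show "AE x in lborel. x \<in> {0..1} \<inter> ?Q -` A \<longleftrightarrow> x \<in> {0<..<1} \<inter> ?Q -` A"
        using AE_lborel_singleton[of 0] AE_lborel_singleton[of 1] by eventually_elim auto
    qed (use QA in auto)
    also have "{0<..<1} \<inter> ?Q -` A = I -` (ereal -` A) \<inter> space ?O"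
      using Geq by (auto simp: space_restrict_space)
    also have "emeasure lborel (I -` (ereal -` A) \<inter> space ?O) = emeasure ?O (I -` (ereal -` A) \<inter> space ?O)"
      by (subst emeasure_restrict_space) (auto simp: space_restrict_space)
    also have "\<dots> = emeasure (distr ?O borel I) (ereal -` A)"
      using measurable_sets[OF meb A]
      by (subst emeasure_distr[OF mI]) auto
    also have "\<dots> = emeasure (K r) (ereal -` A)"
      using distr_I_eq_M by simp
    also have "\<dots> = emeasure (distr (K r) borel ereal) A"
      by (subst emeasure_distr[OF me A]) simp
    finally show "emeasure (distr ?U borel ?Q) A = emeasure (distr (K r) borel ereal) A" .
  qed
qed

end


lemma stoch_cdf:
  assumes F: "feller_semigroup P" and S: "stoch_monotone P" and t: "t \<ge> 0" and rr: "r \<le> r'"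
  shows "cdf (P t r') z \<le> cdf (P t r) z"
proof -
  let ?f = "\<lambda>y::real. - indicator {..z} y :: real"
  have rd: "real_distribution (P t x)" for x
    using F t unfolding feller_semigroup_def markov_semigroup_def real_distribution_def
      real_distribution_axioms_def by auto
  have "mono ?f" by (auto simp: mono_def indicator_def)
  moreover have "?f \<in> borel_measurable borel" by measurable
  moreover have "bounded (range ?f)"
    by (rule boundedI[of _ 1]) (auto simp: indicator_def)
  ultimately have "mono (Pf P t ?f)" using S t unfolding stoch_monotone_def by blast
  then have m: "Pf P t ?f r \<le> Pf P t ?f r'" using rr by (rule monoD)
  have e: "Pf P t ?f x = - cdf (P t x) z" for x
    using real_distribution.int_ind[OF rd[of x], of z] by (simp add: Pf_def)
  show ?thesis using m e[of r] e[of r'] by linarith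
qed

lemma FS_P: assumes F: "feller_semigroup P" and S: "stoch_monotone P" and t: "t \<ge> 0"
  shows "FS (P t)"
proof (rule FS.intro)
  fix r :: real show "cdf_distribution (P t r)"
    using F t unfolding feller_semigroup_def markov_semigroup_def cdf_distribution_def real_distribution_def
      real_distribution_axioms_def by auto
next
  fix h x assume "C0 h"
  then have "C0 (Pf P t h)" using F t unfolding feller_semigroup_def by auto
  then have "continuous_on UNIV (\<lambda>r. \<integral>y. h y \<partial>P t r)" unfolding C0_def Pf_def[abs_def] by simp
  then show "isCont (\<lambda>r. \<integral>y. h y \<partial>P t r) x" using continuous_on_eq_continuous_at[OF open_UNIV] by blast
next
  fix h assume "C0 h"
  then have "C0 (Pf P t h)" using F t unfolding feller_semigroup_def by auto
  then show "((\<lambda>r. \<integral>y. h y \<partial>P t r) \<longlongrightarrow> 0) at_infinity" unfolding C0_def Pf_def[abs_def] by simp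
next
  fix r r' z :: real assume "r \<le> r'"
  then show "cdf (P t r') z \<le> cdf (P t r) z" using stoch_cdf[OF F S t] by blast
qed


theorem lemma3p1:
  fixes P :: "real \<Rightarrow> real \<Rightarrow> real measure"
  assumes "feller_semigroup P" and "stoch_monotone P"
  shows "(\<forall>x t. t \<ge> 0 \<longrightarrow> mono_on {0..1} (Finv P t x))
    \<and> (\<forall>(x::real) t u. t \<ge> 0 \<and> u \<in> {0<..<1} \<longrightarrow> \<bar>Finv P t (ereal x) u\<bar> \<noteq> \<infinity>)
    \<and> (\<forall>t u. t \<ge> 0 \<and> u \<in> {0<..<1} \<longrightarrow> mono (\<lambda>x. Finv P t x u))
    \<and> (\<forall>x t. t \<ge> 0 \<longrightarrow>
         distr (uniform_measure lborel {0..1::real}) borel (Finv P t x) = Ptilde P t x)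
    \<and> (\<forall>t x. t \<ge> 0 \<longrightarrow>
         countable {u \<in> {0..1::real}. \<not> isCont (\<lambda>y. Finv P t y u) x})"
proof (intro conjI allI impI)
  fix x and t :: real assume t: "t \<ge> 0"
  interpret FS "P t" by (rule FS_P[OF assms t])
  have FG: "Finv P t = G" by (simp add: Finv_def G_def fun_eq_iff)
  show "mono_on {0..1} (Finv P t x)"
    unfolding FG by (intro mono_onI G_mono_u)
next
  fix x t u :: real assume tu: "t \<ge> 0 \<and> u \<in> {0<..<1::real}"
  interpret FS "P t" by (rule FS_P[OF assms]) (use tu in simp)
  have FG: "Finv P t = G" by (simp add: Finv_def G_def fun_eq_iff)
  show "\<bar>Finv P t (ereal x) u\<bar> \<noteq> \<infinity>"
    unfolding FG using Geq[of u x] tu by simp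
next
  fix t u :: real assume tu: "t \<ge> 0 \<and> u \<in> {0<..<1::real}"
  interpret FS "P t" by (rule FS_P[OF assms]) (use tu in simp)
  have FG: "Finv P t = G" by (simp add: Finv_def G_def fun_eq_iff)
  show "mono (\<lambda>x. Finv P t x u)"
    unfolding FG by (intro monoI G_mono_x)
next
  fix x and t :: real assume t: "t \<ge> 0"
  interpret FS "P t" by (rule FS_P[OF assms t])
  have FG: "Finv P t = G" by (simp add: Finv_def G_def fun_eq_iff)
  have U: "prob_space (uniform_measure lborel {0..1::real})"
    by (rule prob_space_uniform_measure) simp_all
  show "distr (uniform_measure lborel {0..1::real}) borel (Finv P t x) = Ptilde P t x"
  proof (cases x)
    case (real r)
    then show ?thesis unfolding FG using distr_real[of r] by (simp add: Ptilde_def)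
  next
    case PInf
    then have "Finv P t x = (\<lambda>_. \<infinity>)" by (simp add: Finv_def fun_eq_iff)
    then show ?thesis using PInf distr_const_prob[OF U, of "\<infinity>" borel] by (simp add: Ptilde_def)
  next
    case MInf
    then have "Finv P t x = (\<lambda>_. -\<infinity>)" by (simp add: Finv_def fun_eq_iff)
    then show ?thesis using MInf distr_const_prob[OF U, of "-\<infinity>" borel] by (simp add: Ptilde_def)
  qed
next
  fix t :: real and x assume t: "t \<ge> 0"
  interpret FS "P t" by (rule FS_P[OF assms t])
  have FG: "Finv P t = G" by (simp add: Finv_def G_def fun_eq_iff)
  show "countable {u \<in> {0..1::real}. \<not> isCont (\<lambda>y. Finv P t y u) x}"
    unfolding FG by (rule ctble)
qed


end
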